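(* Let $n\ge 4$, let $\mathcal C$ be a maximal independent set of the cycle $C_n$, let $c:=|\mathcal C|$, $\alpha:=\lfloor n/2\rfloor$, and $a_n:=(-1)^{\lfloor n/2\rfloor}P_{C_n}(-1)$. Let $G$ be the $\mathcal C$-suspension of $C_n$. Then \[ h_{\alpha(G)}(G)= \begin{cases} -a_n,& \text{if } c=\alpha,\\ \operatorname{sgn}(a_n),& \text{if } c=\lceil n/3\rceil<\alpha,\\ a_n,& \text{if } \lceil n/3\rceil<c<\alpha. \end{cases} \]
   Context: For $\varnothing\ne C\subseteq V(G)$, the $C$-suspension of $G$ is obtained by adding a new vertex $z$ adjacent exactly to the vertices of $C$. $C_n$ is the cycle on $n$ vertices. The independence polynomial is $P_G(x)=\sum_i g_ix^i$, $g_i$ the number of independent sets of size $i$. For $G$ on vertex set $[N]$, let $S=K[x_1,\dots,x_N]$ ($K$ a field), $I(G)$ the edge ideal generated by $x_ix_j$ for edges $\{i,j\}$, $\alpha(G)$ the independence number (equal to $\dim S/I(G)$), and write the Hilbert series of $S/I(G)$ uniquely as $h_G(t)/(1-t)^{\alpha(G)}$ with $h_G(t)=\sum_{i}h_i(G)t^i$ a polynomial with nonzero leading coefficient; $h_i(G)=0$ for $i>\deg h_G$. Thus $h_{\alpha(G)}(G)$ is the coefficient of $t^{\alpha(G)}$ in $h_G(t)$. *)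

theory Defs
  imports Complex_Main "HOL-Computational_Algebra.Polynomial" "HOL-Computational_Algebra.Formal_Power_Series"
begin

text \<open>A finite simple graph is given by a vertex set V and a symmetric edge predicate E.\<close>

definition indep_set :: "'a set \<Rightarrow> ('a \<Rightarrow> 'a \<Rightarrow> bool) \<Rightarrow> 'a set \<Rightarrow> bool" where
  "indep_set V E S \<longleftrightarrow> S \<subseteq> V \<and> (\<forall>x\<in>S. \<forall>y\<in>S. \<not> E x y)"

definition maximal_indep_set :: "'a set \<Rightarrow> ('a \<Rightarrow> 'a \<Rightarrow> bool) \<Rightarrow> 'a set \<Rightarrow> bool" where
  "maximal_indep_set V E S \<longleftrightarrow> indep_set V E S \<and>
     (\<forall>T. indep_set V E T \<and> S \<subseteq> T \<longrightarrow> T = S)"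

definition indep_num :: "'a set \<Rightarrow> ('a \<Rightarrow> 'a \<Rightarrow> bool) \<Rightarrow> nat" where
  "indep_num V E = Max {card S | S. indep_set V E S}"

definition indep_poly :: "'a set \<Rightarrow> ('a \<Rightarrow> 'a \<Rightarrow> bool) \<Rightarrow> int poly" where
  "indep_poly V E = (\<Sum>S\<in>{S. indep_set V E S}. monom 1 (card S))"

text \<open>Hilbert function of S/I(G): I(G) is a monomial ideal, so the degree-d component
  of S/I(G) has as K-basis the monomials of degree d not divisible by any x_i x_j
  with ij an edge, i.e. exponent vectors m supported on V with total degree d
  whose support is an independent set.\<close>
definition hilbert_fn :: "'a set \<Rightarrow> ('a \<Rightarrow> 'a \<Rightarrow> bool) \<Rightarrow> nat \<Rightarrow> nat" where
  "hilbert_fn V E d = card {m :: 'a \<Rightarrow> nat. (\<forall>x. x \<notin> V \<longrightarrow> m x = 0) \<and>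
      (\<Sum>x\<in>V. m x) = d \<and> indep_set V E {x\<in>V. m x \<noteq> 0}}"

definition hilbert_series :: "'a set \<Rightarrow> ('a \<Rightarrow> 'a \<Rightarrow> bool) \<Rightarrow> int fps" where
  "hilbert_series V E = Abs_fps (\<lambda>d. int (hilbert_fn V E d))"

definition h_coeff :: "'a set \<Rightarrow> ('a \<Rightarrow> 'a \<Rightarrow> bool) \<Rightarrow> nat \<Rightarrow> int" where
  "h_coeff V E i = fps_nth (hilbert_series V E * (1 - fps_X) ^ indep_num V E) i"

definition cycle_edge :: "nat \<Rightarrow> nat \<Rightarrow> nat \<Rightarrow> bool" where
  "cycle_edge n i j \<longleftrightarrow> i < n \<and> j < n \<and> (j = (i + 1) mod n \<or> i = (j + 1) mod n)"

definition susp_edge :: "('a \<Rightarrow> 'a \<Rightarrow> bool) \<Rightarrow> 'a \<Rightarrow> 'a set \<Rightarrow> 'a \<Rightarrow> 'a \<Rightarrow> bool" where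
  "susp_edge E z C x y \<longleftrightarrow> E x y \<or> (x = z \<and> y \<in> C) \<or> (y = z \<and> x \<in> C)"

end

theory Submission
  imports Defs
begin



definition Mset :: "'a set \<Rightarrow> nat \<Rightarrow> ('a \<Rightarrow> nat) set" where
  "Mset S j = {m. (\<forall>x. x \<notin> S \<longrightarrow> m x = 0) \<and> (\<forall>x\<in>S. m x \<noteq> 0) \<and> sum m S = j}"

lemma Mset_finite:
  assumes "finite S" shows "finite (Mset S j)"
proof -
  have "Mset S j \<subseteq> {f. \<forall>x. (x \<in> S \<longrightarrow> f x \<in> {0..j}) \<and> (x \<notin> S \<longrightarrow> f x = 0)}"
  proof
    fix m assume m: "m \<in> Mset S j"
    have "\<forall>x\<in>S. m x \<le> j" using m assms unfolding Mset_def
      by (metis (mono_tags, lifting) mem_Collect_eq member_le_sum zero_le)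
    then show "m \<in> {f. \<forall>x. (x \<in> S \<longrightarrow> f x \<in> {0..j}) \<and> (x \<notin> S \<longrightarrow> f x = 0)}"
      using m unfolding Mset_def by auto
  qed
  then show ?thesis using finite_subset finite_set_of_finite_funs[OF assms, of "{0..j}" 0] by blast
qed

lemma Mset_zero: "a \<in> S \<Longrightarrow> finite S \<Longrightarrow> Mset S 0 = {}"
  unfolding Mset_def by auto

lemma Mset_rec:
  assumes fin: "finite T" and a: "a \<notin> T"
  shows "card (Mset (insert a T) (Suc j)) = card (Mset (insert a T) j) + card (Mset T j)"
proof -
  let ?S = "insert a T"
  let ?A = "{m \<in> Mset ?S (Suc j). m a \<ge> 2}"
  let ?B = "{m \<in> Mset ?S (Suc j). m a = 1}"
  have un: "Mset ?S (Suc j) = ?A \<union> ?B"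
    unfolding Mset_def by auto
  have dis: "?A \<inter> ?B = {}" by auto
  have finS: "finite (Mset ?S (Suc j))" using Mset_finite fin by blast
  have sumS: "\<And>m. sum m ?S = m a + sum m T" using fin a by simp
  have A: "?A = (\<lambda>m. m(a := Suc (m a))) ` Mset ?S j"
  proof (rule set_eqI, rule iffI)
    fix m assume m: "m \<in> ?A"
    define m' where "m' = m(a := m a - 1)"
    have "sum m' T = sum m T" unfolding m'_def using a by (intro sum.cong) auto
    then have "m' \<in> Mset ?S j" using m sumS[of m] sumS[of m'] unfolding Mset_def m'_def by auto
    moreover have "m = m'(a := Suc (m' a))" using m unfolding m'_def by auto
    ultimately show "m \<in> (\<lambda>m. m(a := Suc (m a))) ` Mset ?S j" by blast
  next
    fix m assume "m \<in> (\<lambda>m. m(a := Suc (m a))) ` Mset ?S j"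
    then obtain m' where m': "m' \<in> Mset ?S j" and mm: "m = m'(a := Suc (m' a))" by blast
    have "sum m T = sum m' T" unfolding mm using a by (intro sum.cong) auto
    then show "m \<in> ?A" using m' sumS[of m] sumS[of m'] unfolding Mset_def mm by auto
  qed
  have injA: "inj_on (\<lambda>m. m(a := Suc (m a))) (Mset ?S j)"
  proof (rule inj_onI)
    fix m1 m2 assume "m1 \<in> Mset ?S j" "m2 \<in> Mset ?S j" and e: "m1(a := Suc (m1 a)) = m2(a := Suc (m2 a))"
    show "m1 = m2"
    proof
      fix x show "m1 x = m2 x" using fun_cong[OF e, of x] by (cases "x = a") auto
    qed
  qed
  have B: "?B = (\<lambda>m. m(a := 1)) ` Mset T j"
  proof (rule set_eqI, rule iffI)
    fix m assume m: "m \<in> ?B"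
    define m' where "m' = m(a := 0)"
    have "sum m' T = sum m T" unfolding m'_def using a by (intro sum.cong) auto
    then have "m' \<in> Mset T j" using m sumS[of m] a unfolding Mset_def m'_def by auto
    moreover have "m = m'(a := 1)" using m unfolding m'_def by auto
    ultimately show "m \<in> (\<lambda>m. m(a := 1)) ` Mset T j" by blast
  next
    fix m assume "m \<in> (\<lambda>m. m(a := 1)) ` Mset T j"
    then obtain m' where m': "m' \<in> Mset T j" and mm: "m = m'(a := 1)" by blast
    have "sum m T = sum m' T" unfolding mm using a by (intro sum.cong) auto
    then show "m \<in> ?B" using m' sumS[of m] a unfolding Mset_def mm by auto
  qed
  have injB: "inj_on (\<lambda>m. m(a := 1)) (Mset T j)"
  proof (rule inj_onI)
    fix m1 m2 assume m12: "m1 \<in> Mset T j" "m2 \<in> Mset T j" and e: "m1(a := 1) = m2(a := 1)"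
    show "m1 = m2"
    proof
      fix x show "m1 x = m2 x" using fun_cong[OF e, of x] m12 a unfolding Mset_def by (cases "x = a") auto
    qed
  qed
  have "card (Mset ?S (Suc j)) = card ?A + card ?B"
    using un dis finS by (metis (no_types, lifting) card_Un_disjoint finite_Un)
  also have "card ?A = card (Mset ?S j)" using A injA card_image by metis
  also have "card ?B = card (Mset T j)" using B injB card_image by metis
  finally show ?thesis .
qed

definition FS :: "'a set \<Rightarrow> int fps" where "FS S = Abs_fps (\<lambda>j. int (card (Mset S j)))"

lemma FS_empty: "FS ({}::'a set) = 1"
proof (rule fps_ext)
  fix j
  have e: "Mset ({}::'a set) j = (if j = 0 then {\<lambda>_. 0} else {})" unfolding Mset_def by auto
  show "fps_nth (FS ({}::'a set)) j = fps_nth 1 j"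
  proof (cases "j = 0")
    case True then show ?thesis using e by (simp add: FS_def)
  next
    case False then show ?thesis using e by (simp add: FS_def)
  qed
qed

lemma FS_insert:
  assumes "finite T" "a \<notin> T"
  shows "FS (insert a T) * (1 - fps_X) = fps_X * FS T"
proof (rule fps_ext)
  fix j show "fps_nth (FS (insert a T) * (1 - fps_X)) j = fps_nth (fps_X * FS T) j"
  proof (cases j)
    case 0 then show ?thesis using Mset_zero[of a "insert a T"] assms unfolding FS_def by simp
  next
    case (Suc k)
    then show ?thesis using Mset_rec[OF assms, of k] unfolding FS_def
      by (simp add: algebra_simps)
  qed
qed

lemma FS_main: "finite S \<Longrightarrow> FS S * (1 - fps_X) ^ card S = fps_X ^ card S"
proof (induction S rule: finite_induct)
  case empty then show ?case by (simp add: FS_empty)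
next
  case (insert a T)
  have "FS (insert a T) * (1 - fps_X) ^ card (insert a T) = (FS (insert a T) * (1 - fps_X)) * (1 - fps_X) ^ card T"
    using insert by (simp add: algebra_simps)
  also have "\<dots> = (fps_X * FS T) * (1 - fps_X) ^ card T" by (simp only: FS_insert[OF insert(1,2)])
  also have "\<dots> = fps_X * (FS T * (1 - fps_X) ^ card T)" by (simp only: mult.assoc)
  also have "\<dots> = fps_X ^ card (insert a T)" using insert by simp
  finally show ?case .
qed

lemma one_minus_X_pow: "fps_nth ((1 - fps_X :: int fps) ^ k) i = (if i > k then 0 else if i = k then (-1) ^ k else fps_nth ((1 - fps_X :: int fps) ^ k) i)"
proof (induction k arbitrary: i)
  case 0 then show ?case by (simp add: fps_one_nth)
next
  case (Suc k)
  have e: "(1 - fps_X :: int fps) ^ Suc k = (1 - fps_X) ^ k - fps_X * (1 - fps_X) ^ k" by (simp add: algebra_simps)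
  show ?case
  proof (cases i)
    case 0 then show ?thesis by simp
  next
    case (Suc i')
    have "fps_nth ((1 - fps_X :: int fps) ^ Suc k) i = fps_nth ((1 - fps_X) ^ k) i - fps_nth ((1 - fps_X) ^ k) i'"
      unfolding e using Suc by simp
    then show ?thesis using Suc.IH[of i] Suc.IH[of i'] \<open>i = Suc i'\<close> by (auto simp: not_less)
  qed
qed

lemma one_minus_X_pow_diag: "fps_nth ((1 - fps_X :: int fps) ^ k) k = (-1) ^ k"
  using one_minus_X_pow[of k k] by simp



lemma indep_finite: "finite V \<Longrightarrow> finite {S. indep_set V E S}"
  by (rule finite_subset[of _ "Pow V"]) (auto simp: indep_set_def)

lemma hilbert_fn_sum:
  assumes fin: "finite V"
  shows "hilbert_fn V E d = (\<Sum>S\<in>{S. indep_set V E S}. card (Mset S d))"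
proof -
  let ?I = "{S. indep_set V E S}"
  let ?H = "{m :: 'a \<Rightarrow> nat. (\<forall>x. x \<notin> V \<longrightarrow> m x = 0) \<and>
      (\<Sum>x\<in>V. m x) = d \<and> indep_set V E {x\<in>V. m x \<noteq> 0}}"
  have eq: "?H = (\<Union>S\<in>?I. Mset S d)"
  proof (rule set_eqI, rule iffI)
    fix m assume m: "m \<in> ?H"
    let ?S = "{x\<in>V. m x \<noteq> 0}"
    have "sum m ?S = sum m V" using fin by (intro sum.mono_neutral_left) auto
    then have "m \<in> Mset ?S d" using m unfolding Mset_def by auto
    then show "m \<in> (\<Union>S\<in>?I. Mset S d)" using m by blast
  next
    fix m assume "m \<in> (\<Union>S\<in>?I. Mset S d)"
    then obtain S where S: "indep_set V E S" and m: "m \<in> Mset S d" by blast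
    have SV: "S \<subseteq> V" using S unfolding indep_set_def by auto
    have "sum m S = sum m V" using fin SV m unfolding Mset_def by (intro sum.mono_neutral_left) auto
    moreover have "{x\<in>V. m x \<noteq> 0} = S" using SV m unfolding Mset_def by auto
    ultimately show "m \<in> ?H" using m S SV unfolding Mset_def by auto
  qed
  have "card ?H = (\<Sum>S\<in>?I. card (Mset S d))"
    unfolding eq
  proof (rule card_UN_disjoint)
    show "finite ?I" using indep_finite[OF fin] .
    show "\<forall>S\<in>?I. finite (Mset S d)" using fin Mset_finite finite_subset
      by (metis (no_types, lifting) indep_set_def mem_Collect_eq)
    show "\<forall>S\<in>?I. \<forall>T\<in>?I. S \<noteq> T \<longrightarrow> Mset S d \<inter> Mset T d = {}"
    proof (intro ballI impI)
      fix S T :: "'a set" assume "S \<noteq> T"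
      show "Mset S d \<inter> Mset T d = {}"
      proof (rule ccontr)
        assume "Mset S d \<inter> Mset T d \<noteq> {}"
        then obtain m where "m \<in> Mset S d" "m \<in> Mset T d" by blast
        then have "S = {x. m x \<noteq> 0}" "T = {x. m x \<noteq> 0}" unfolding Mset_def by auto
        then show False using \<open>S \<noteq> T\<close> by simp
      qed
    qed
  qed
  then show ?thesis unfolding hilbert_fn_def .
qed

definition ipsum :: "'a set \<Rightarrow> ('a \<Rightarrow> 'a \<Rightarrow> bool) \<Rightarrow> int" where
  "ipsum V E = (\<Sum>S\<in>{S. indep_set V E S}. (-1) ^ card S)"

lemma poly_ip: "poly (indep_poly V E) (-1) = ipsum V E"
  unfolding indep_poly_def ipsum_def by (simp add: poly_sum poly_monom)

lemma indep_le_num: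
  assumes "finite V" "indep_set V E S" shows "card S \<le> indep_num V E"
proof -
  have "finite {card S | S. indep_set V E S}" using indep_finite[OF assms(1), of E] by simp
  then show ?thesis unfolding indep_num_def using assms(2) by (intro Max_ge) auto
qed

lemma indep_numI:
  assumes "finite V" "indep_set V E S0" "card S0 = k" "\<And>S. indep_set V E S \<Longrightarrow> card S \<le> k"
  shows "indep_num V E = k"
proof -
  have "finite {card S | S. indep_set V E S}" using indep_finite[OF assms(1), of E] by simp
  then show ?thesis unfolding indep_num_def using assms by (intro Max_eqI) auto
qed

lemma h_top:
  assumes fin: "finite V"
  shows "h_coeff V E (indep_num V E) = (-1) ^ indep_num V E * ipsum V E"
proof -
  let ?I = "{S. indep_set V E S}"
  let ?D = "indep_num V E"
  have finI: "finite ?I" using indep_finite[OF fin] .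
  have finS: "\<And>S. S \<in> ?I \<Longrightarrow> finite S" using fin finite_subset unfolding indep_set_def by blast
  have hs: "hilbert_series V E = (\<Sum>S\<in>?I. FS S)"
  proof (rule fps_ext)
    fix d show "fps_nth (hilbert_series V E) d = fps_nth (\<Sum>S\<in>?I. FS S) d"
      unfolding hilbert_series_def fps_sum_nth FS_def using hilbert_fn_sum[OF fin, of E d] by simp
  qed
  have "hilbert_series V E * (1 - fps_X) ^ ?D = (\<Sum>S\<in>?I. FS S * (1 - fps_X) ^ ?D)"
    unfolding hs by (simp add: sum_distrib_right)
  also have "\<dots> = (\<Sum>S\<in>?I. fps_X ^ card S * (1 - fps_X) ^ (?D - card S))"
  proof (rule sum.cong[OF refl])
    fix S assume S: "S \<in> ?I"
    have le: "card S \<le> ?D" using S indep_le_num[OF fin] by auto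
    have "FS S * (1 - fps_X) ^ ?D = (FS S * (1 - fps_X) ^ card S) * (1 - fps_X) ^ (?D - card S)"
      using le by (simp add: mult.assoc power_add[symmetric])
    then show "FS S * (1 - fps_X) ^ ?D = fps_X ^ card S * (1 - fps_X) ^ (?D - card S)"
      using FS_main[OF finS[OF S]] by simp
  qed
  finally have e: "hilbert_series V E * (1 - fps_X) ^ ?D = (\<Sum>S\<in>?I. fps_X ^ card S * (1 - fps_X) ^ (?D - card S))" .
  have "h_coeff V E ?D = (\<Sum>S\<in>?I. (-1) ^ (?D - card S))"
    unfolding h_coeff_def e fps_sum_nth
  proof (rule sum.cong[OF refl])
    fix S assume S: "S \<in> ?I"
    have le: "card S \<le> ?D" using S indep_le_num[OF fin] by auto
    then show "fps_nth (fps_X ^ card S * (1 - fps_X) ^ (?D - card S)) ?D = (-1::int) ^ (?D - card S)"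
      using one_minus_X_pow_diag[of "?D - card S"] by (simp add: fps_X_power_mult_nth)
  qed
  also have "\<dots> = (\<Sum>S\<in>?I. (-1) ^ ?D * (-1) ^ card S)"
  proof (rule sum.cong[OF refl])
    fix S assume S: "S \<in> ?I"
    have le: "card S \<le> ?D" using S indep_le_num[OF fin] by auto
    from le obtain k where k: "?D = k + card S" by (metis le_add_diff_inverse2)
    show "(-1::int) ^ (?D - card S) = (-1) ^ ?D * (-1) ^ card S"
      unfolding k by (simp add: power_add mult.assoc flip: power_mult_distrib)
  qed
  finally show ?thesis unfolding ipsum_def by (simp add: sum_distrib_left)
qed



definition sc :: "nat \<Rightarrow> nat \<Rightarrow> nat" where "sc n x = (if Suc x = n then 0 else Suc x)"
definition pc :: "nat \<Rightarrow> nat \<Rightarrow> nat" where "pc n x = (if x = 0 then n - 1 else x - 1)"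
definition cyc :: "nat \<Rightarrow> nat set \<Rightarrow> bool" where
  "cyc n S \<longleftrightarrow> S \<subseteq> {0..<n} \<and> (\<forall>x\<in>S. sc n x \<notin> S)"

lemma sc_lt: "x < n \<Longrightarrow> sc n x < n" unfolding sc_def by auto
lemma pc_lt: "x < n \<Longrightarrow> pc n x < n" unfolding pc_def by auto
lemma pc_sc: "x < n \<Longrightarrow> pc n (sc n x) = x" unfolding sc_def pc_def by auto
lemma sc_pc: "x < n \<Longrightarrow> sc n (pc n x) = x" unfolding sc_def pc_def by auto
lemma sc_neq: "2 \<le> n \<Longrightarrow> sc n x \<noteq> x" unfolding sc_def by auto
lemma sc_sc_neq: "3 \<le> n \<Longrightarrow> x < n \<Longrightarrow> sc n (sc n x) \<noteq> x" unfolding sc_def by auto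
lemma sc_mod: "x < n \<Longrightarrow> Suc x mod n = sc n x" unfolding sc_def
  by (simp add: mod_Suc)
lemma sc_inj: "x < n \<Longrightarrow> y < n \<Longrightarrow> sc n x = sc n y \<Longrightarrow> x = y"
  by (metis pc_sc)
lemma sc_inj_on: "inj_on (sc n) {0..<n}"
  by (rule inj_onI) (auto intro: sc_inj)

lemma cycle_edge_sc: "cycle_edge n i j \<longleftrightarrow> i < n \<and> j < n \<and> (j = sc n i \<or> i = sc n j)"
  unfolding cycle_edge_def using sc_mod by auto

lemma indep_cyc: "2 \<le> n \<Longrightarrow> indep_set {0..<n} (cycle_edge n) S \<longleftrightarrow> cyc n S"
  unfolding indep_set_def cyc_def cycle_edge_sc by (auto simp: subset_iff)

definition pind :: "nat \<Rightarrow> nat \<Rightarrow> nat set \<Rightarrow> bool" where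
  "pind a b S \<longleftrightarrow> S \<subseteq> {a..<b} \<and> (\<forall>x\<in>S. Suc x \<notin> S)"

definition sgs :: "'a set set \<Rightarrow> int" where "sgs F = (\<Sum>T\<in>F. (-1) ^ card T)"

lemma sgs_insert_img:
  assumes "\<And>S. S \<in> F \<Longrightarrow> x \<notin> S \<and> finite S"
  shows "sgs (insert x ` F) = - sgs F"
proof -
  have inj: "inj_on (insert x) F"
    by (rule inj_onI) (metis Diff_insert_absorb assms)
  have "sgs (insert x ` F) = (\<Sum>T\<in>F. (-1) ^ card (insert x T))"
    unfolding sgs_def by (simp add: sum.reindex[OF inj])
  also have "\<dots> = (\<Sum>T\<in>F. - ((-1) ^ card T))"
    by (rule sum.cong[OF refl]) (simp add: assms)
  finally show ?thesis unfolding sgs_def by (simp add: sum_negf)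
qed

lemma sgs_union:
  assumes "finite A" "finite B" "A \<inter> B = {}"
  shows "sgs (A \<union> B) = sgs A + sgs B"
  unfolding sgs_def using assms by (simp add: sum.union_disjoint)

fun fq :: "nat \<Rightarrow> int" where
  "fq 0 = 1" | "fq (Suc 0) = 0" | "fq (Suc (Suc k)) = fq (Suc k) - fq k"

lemma pind_finite: "finite {S. pind a b S}"
  by (rule finite_subset[of _ "Pow {a..<b}"]) (auto simp: pind_def)

lemma pind_fin_mem: "pind a b S \<Longrightarrow> finite S"
  unfolding pind_def using finite_subset by blast

lemma q_val: "sgs {S. pind a (a + k) S} = fq k"
proof (induction k rule: fq.induct)
  case 1
  have "{S. pind a (a + 0) S} = {{}}" unfolding pind_def by auto
  then show ?case by (simp add: sgs_def)
next
  case 2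
  have "{S. pind a (a + Suc 0) S} = {{}, {a}}" unfolding pind_def by auto
  then show ?case by (simp add: sgs_def)
next
  case (3 k)
  let ?F1 = "{S. pind a (a + Suc k) S}"
  let ?F0 = "{S. pind a (a + k) S}"
  have eq: "{S. pind a (a + Suc (Suc k)) S} = ?F1 \<union> insert (a + Suc k) ` ?F0"
  proof (rule set_eqI, rule iffI)
    fix S assume S: "S \<in> {S. pind a (a + Suc (Suc k)) S}"
    show "S \<in> ?F1 \<union> insert (a + Suc k) ` ?F0"
    proof (cases "a + Suc k \<in> S")
      case True
      have "a + k \<notin> S" using S True unfolding pind_def by force
      then have "pind a (a + k) (S - {a + Suc k})" using S unfolding pind_def by (auto simp: less_Suc_eq)
      moreover have "S = insert (a + Suc k) (S - {a + Suc k})" using True by auto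
      ultimately show ?thesis by blast
    next
      case False
      then have "pind a (a + Suc k) S" using S unfolding pind_def by (auto simp: less_Suc_eq)
      then show ?thesis by blast
    qed
  next
    fix S assume "S \<in> ?F1 \<union> insert (a + Suc k) ` ?F0"
    then show "S \<in> {S. pind a (a + Suc (Suc k)) S}"
      unfolding pind_def by (auto simp: subset_iff)
  qed
  have dis: "?F1 \<inter> insert (a + Suc k) ` ?F0 = {}" unfolding pind_def by auto
  have "sgs {S. pind a (a + Suc (Suc k)) S} = sgs ?F1 + sgs (insert (a + Suc k) ` ?F0)"
    unfolding eq by (rule sgs_union) (use dis pind_finite in auto)
  also have "sgs (insert (a + Suc k) ` ?F0) = - sgs ?F0"
    by (rule sgs_insert_img) (auto simp: pind_def intro: finite_subset[OF _ finite_atLeastLessThan])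
  finally show ?case using 3 by simp
qed

lemma q_val': "a \<le> b \<Longrightarrow> sgs {S. pind a b S} = fq (b - a)"
  using q_val[of a "b - a"] by simp

lemma fq3: "fq (k + 3) = - fq k"
  by (simp add: numeral_3_eq_3)

lemma fq3j: "fq (3 * j + r) = (-1) ^ j * fq r"
proof (induction j)
  case 0 then show ?case by simp
next
  case (Suc j)
  have "fq (3 * Suc j + r) = fq ((3 * j + r) + 3)" by (simp add: algebra_simps)
  also have "\<dots> = - fq (3 * j + r)" by (rule fq3)
  finally show ?case using Suc by simp
qed

lemma cyc_decomp:
  assumes "4 \<le> n"
  shows "{S. cyc n S} = {S. pind 1 n S} \<union> insert 0 ` {S. pind 2 (n - 1) S}"
proof (rule set_eqI, rule iffI)
  fix S assume "S \<in> {S. cyc n S}"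
  then have S: "cyc n S" by simp
  show "S \<in> {S. pind 1 n S} \<union> insert 0 ` {S. pind 2 (n - 1) S}"
  proof (cases "0 \<in> S")
    case True
    have "sc n 0 \<notin> S" using S True unfolding cyc_def by auto
    then have n1: "1 \<notin> S" using assms by (simp add: sc_def)
    have "sc n (n - 1) = 0" using assms by (simp add: sc_def)
    then have nn: "n - 1 \<notin> S" using S True unfolding cyc_def by force
    have "pind 2 (n - 1) (S - {0})"
      unfolding pind_def
    proof
      show "S - {0} \<subseteq> {2..<n - 1}"
      proof
        fix x assume x: "x \<in> S - {0}"
        have "x < n" using S x unfolding cyc_def by auto
        moreover have "x \<noteq> 1" "x \<noteq> n - 1" "x \<noteq> 0" using x n1 nn by auto
        ultimately show "x \<in> {2..<n - 1}" by simp
      qed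
      show "\<forall>x\<in>S - {0}. Suc x \<notin> S - {0}"
      proof
        fix x assume x: "x \<in> S - {0}"
        then have "x < n" using S unfolding cyc_def by auto
        show "Suc x \<notin> S - {0}"
        proof (cases "Suc x = n")
          case True then show ?thesis using S unfolding cyc_def by auto
        next
          case False then have "sc n x = Suc x" by (simp add: sc_def)
          then show ?thesis using S x unfolding cyc_def by auto
        qed
      qed
    qed
    moreover have "S = insert 0 (S - {0})" using True by auto
    ultimately show ?thesis by blast
  next
    case False
    have "pind 1 n S"
      unfolding pind_def
    proof
      show "S \<subseteq> {1..<n}"
      proof
        fix x assume x: "x \<in> S"
        have "x < n" using S x unfolding cyc_def by auto
        moreover have "x \<noteq> 0"
        proof
          assume "x = 0" then show False using x False by simp
        qed
        ultimately show "x \<in> {1..<n}" by simp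
      qed
      show "\<forall>x\<in>S. Suc x \<notin> S"
      proof
        fix x assume x: "x \<in> S"
        then have "x < n" using S unfolding cyc_def by auto
        show "Suc x \<notin> S"
        proof (cases "Suc x = n")
          case True then show ?thesis using S unfolding cyc_def by auto
        next
          case False then have "sc n x = Suc x" by (simp add: sc_def)
          then show ?thesis using S x unfolding cyc_def by auto
        qed
      qed
    qed
    then show ?thesis by blast
  qed
next
  fix S assume "S \<in> {S. pind 1 n S} \<union> insert 0 ` {S. pind 2 (n - 1) S}"
  then consider "pind 1 n S" | S' where "pind 2 (n - 1) S'" "S = insert 0 S'" by blast
  then show "S \<in> {S. cyc n S}"
  proof cases
    case 1
    have S1: "S \<subseteq> {1..<n}" "\<And>x. x \<in> S \<Longrightarrow> Suc x \<notin> S" using 1 unfolding pind_def by auto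
    have "cyc n S" unfolding cyc_def
    proof
      show "S \<subseteq> {0..<n}" using S1 by auto
      show "\<forall>x\<in>S. sc n x \<notin> S"
      proof
        fix x assume x: "x \<in> S"
        show "sc n x \<notin> S"
        proof (cases "Suc x = n")
          case True then have "sc n x = 0" by (simp add: sc_def)
          then show ?thesis using S1 by auto
        next
          case False then have "sc n x = Suc x" by (simp add: sc_def)
          then show ?thesis using S1 x by auto
        qed
      qed
    qed
    then show ?thesis by simp
  next
    case 2
    have S1: "S' \<subseteq> {2..<n - 1}" "\<And>x. x \<in> S' \<Longrightarrow> Suc x \<notin> S'" using 2 unfolding pind_def by auto
    have "cyc n S" unfolding cyc_def 2(2)
    proof
      show "insert 0 S' \<subseteq> {0..<n}"
      proof
        fix x assume "x \<in> insert 0 S'"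
        then consider "x = 0" | "x \<in> {2..<n - 1}" using S1(1) by blast
        then show "x \<in> {0..<n}" using assms by cases auto
      qed
      show "\<forall>x\<in>insert 0 S'. sc n x \<notin> insert 0 S'"
      proof
        fix x assume x: "x \<in> insert 0 S'"
        show "sc n x \<notin> insert 0 S'"
        proof (cases "x = 0")
          case True then have "sc n x = 1" using assms by (simp add: sc_def)
          then show ?thesis using S1 by auto
        next
          case False
          then have "x \<in> S'" using x by auto
          then have "x \<in> {2..<n - 1}" using S1(1) by blast
          then have "Suc x < n" by (simp add: less_diff_conv)
          then have "sc n x = Suc x" by (simp add: sc_def)
          then show ?thesis using S1 \<open>x \<in> S'\<close> by auto
        qed
      qed
    qed
    then show ?thesis by simp
  qed
qed

lemma cyc_finite: "finite {S. cyc n S}"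
  by (rule finite_subset[of _ "Pow {0..<n}"]) (auto simp: cyc_def)

lemma A_val:
  assumes "4 \<le> n"
  shows "sgs {S. cyc n S} = (if n mod 3 = 0 then 2 * (-1) ^ (n div 3)
          else if n mod 3 = 1 then (-1) ^ (n div 3) else - ((-1) ^ (n div 3)))"
proof -
  have dis: "{S. pind 1 n S} \<inter> insert 0 ` {S. pind 2 (n - 1) S} = {}" unfolding pind_def by auto
  have "sgs {S. cyc n S} = sgs {S. pind 1 n S} + sgs (insert 0 ` {S. pind 2 (n - 1) S})"
    unfolding cyc_decomp[OF assms] by (rule sgs_union) (use dis pind_finite in auto)
  also have "sgs (insert 0 ` {S. pind 2 (n - 1) S}) = - sgs {S. pind 2 (n - 1) S}"
    by (rule sgs_insert_img) (auto simp: pind_def intro: finite_subset[OF _ finite_atLeastLessThan])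
  finally have A: "sgs {S. cyc n S} = fq (n - 1) - fq (n - 3)"
    using q_val'[of 1 n] q_val'[of 2 "n - 1"] assms by (simp add: numeral_3_eq_3)
  define j where "j = n div 3 - 1"
  define r where "r = n mod 3"
  have d1: "n div 3 \<ge> 1" using assms by auto
  have nj2: "n div 3 = Suc j" unfolding j_def using d1 by simp
  have "n = 3 * (n div 3) + n mod 3" by simp
  then have nj1: "n = 3 * j + 3 + r" unfolding nj2 r_def by simp
  note nj = nj1 nj2
  have r3: "r < 3" unfolding r_def by auto
  have e1: "n - 1 = 3 * j + (2 + r)" "n - 3 = 3 * j + r" using nj by auto
  have fq2: "fq 2 = -1" by (simp add: numeral_2_eq_2)
  have fq4: "fq 4 = 0" by (simp add: numeral_eq_Suc)
  have fq3': "fq 3 = -1" by (simp add: numeral_eq_Suc)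
  have "r = 0 \<or> r = 1 \<or> r = 2" using r3 by auto
  then show ?thesis
  proof (elim disjE)
    assume r: "r = 0"
    show ?thesis unfolding A e1 fq3j using r fq2 nj(2) r_def by simp
  next
    assume r: "r = 1"
    have "3 * j + (2 + r) = 3 * (Suc j) + 0" using r by simp
    then have "fq (3 * j + (2 + r)) = fq (3 * (Suc j) + 0)" by (rule arg_cong)
    then show ?thesis unfolding A e1 fq3j using r nj(2) r_def by (simp add: fq3j)
  next
    assume r: "r = 2"
    have "3 * j + (2 + r) = 3 * (Suc j) + 1" using r by simp
    then have "fq (3 * j + (2 + r)) = fq (3 * (Suc j) + 1)" by (rule arg_cong)
    then show ?thesis unfolding A e1 fq3j using r fq2 nj(2) r_def by (simp add: fq3j)
  qed
qed



lemma cyc_subset: "cyc n T \<Longrightarrow> S \<subseteq> T \<Longrightarrow> cyc n S"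
  unfolding cyc_def by blast

lemma cyc_card: assumes "2 \<le> n" "cyc n S" shows "2 * card S \<le> n"
proof -
  have Sn: "S \<subseteq> {0..<n}" using assms unfolding cyc_def by auto
  have fin: "finite S" using Sn finite_subset by blast
  have inj: "inj_on (sc n) S" using sc_inj_on Sn inj_on_subset by blast
  have dis: "S \<inter> sc n ` S = {}" using assms unfolding cyc_def by auto
  have sub: "S \<union> sc n ` S \<subseteq> {0..<n}" using Sn sc_lt by auto
  have "card (S \<union> sc n ` S) = card S + card S" using fin dis card_image[OF inj] by (simp add: card_Un_disjoint)
  moreover have "card (S \<union> sc n ` S) \<le> n" using card_mono[OF _ sub] by simp
  ultimately show ?thesis by simp
qed

lemma evens_cyc: "cyc n ((\<lambda>i. 2 * i) ` {0..<n div 2})"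
  unfolding cyc_def sc_def by auto presburger+

lemma evens_card: "card ((\<lambda>i. 2 * i) ` {0..<n div 2}) = n div 2"
  by (subst card_image) (auto simp: inj_on_def)

lemma maximal_props:
  assumes n4: "4 \<le> n" and mx: "maximal_indep_set {0..<n} (cycle_edge n) C"
  shows "cyc n C" "\<And>t. t < n \<Longrightarrow> t \<notin> C \<Longrightarrow> pc n t \<in> C \<or> sc n t \<in> C"
proof -
  show cC: "cyc n C" using mx indep_cyc n4 unfolding maximal_indep_set_def by auto
  fix t assume t: "t < n" "t \<notin> C"
  show "pc n t \<in> C \<or> sc n t \<in> C"
  proof (rule ccontr)
    assume h: "\<not> (pc n t \<in> C \<or> sc n t \<in> C)"
    have "cyc n (insert t C)"
      unfolding cyc_def
    proof
      show "insert t C \<subseteq> {0..<n}" using cC t unfolding cyc_def by auto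
      show "\<forall>x\<in>insert t C. sc n x \<notin> insert t C"
      proof
        fix x assume x: "x \<in> insert t C"
        show "sc n x \<notin> insert t C"
        proof (cases "x = t")
          case True then show ?thesis using h sc_neq[of n t] n4 by auto
        next
          case False
          then have xC: "x \<in> C" "x < n" using x cC unfolding cyc_def by auto
          have "sc n x \<noteq> t" using h pc_sc[OF xC(2)] xC by auto
          then show ?thesis using cC xC unfolding cyc_def by auto
        qed
      qed
    qed
    then have "indep_set {0..<n} (cycle_edge n) (insert t C)" using indep_cyc n4 by auto
    then have "insert t C = C" using mx unfolding maximal_indep_set_def by blast
    then show False using t by auto
  qed
qed

locale cctx =
  fixes n :: nat and C :: "nat set"
  assumes n4: "4 \<le> n" and cC: "cyc n C"
    and mx: "\<And>t. t < n \<Longrightarrow> t \<notin> C \<Longrightarrow> pc n t \<in> C \<or> sc n t \<in> C"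
begin

lemma Cn: "C \<subseteq> {0..<n}" using cC unfolding cyc_def by auto
lemma Cfin: "finite C" using Cn finite_subset by blast
lemma Cmem: "y \<in> C \<Longrightarrow> y < n" using Cn by auto
lemma sc_notC: "y \<in> C \<Longrightarrow> sc n y \<notin> C" using cC unfolding cyc_def by auto
lemma pc_notC: "y \<in> C \<Longrightarrow> pc n y \<notin> C" using cC sc_pc[OF Cmem] unfolding cyc_def by metis

definition FC where "FC = {T. cyc n T \<and> T \<inter> C = {}}"

lemma FC_finite: "finite FC"
  by (rule finite_subset[of _ "Pow {0..<n}"]) (auto simp: FC_def cyc_def)

lemma FC_mem: "T \<in> FC \<Longrightarrow> t \<in> T \<Longrightarrow> t < n \<and> t \<notin> C \<and> sc n t \<notin> T"
  unfolding FC_def cyc_def by auto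

lemma FC_card: assumes T: "T \<in> FC" shows "card T \<le> card C"
proof -
  define phi where "phi t = (if sc n t \<in> C then sc n t else sc n (sc n t))" for t
  have img: "phi ` T \<subseteq> C"
  proof
    fix y assume "y \<in> phi ` T"
    then obtain t where t: "t \<in> T" "y = phi t" by blast
    have tt: "t < n" "t \<notin> C" using FC_mem[OF T t(1)] by auto
    show "y \<in> C"
    proof (cases "sc n t \<in> C")
      case True then show ?thesis using t unfolding phi_def by simp
    next
      case False
      have "pc n (sc n t) \<in> C \<or> sc n (sc n t) \<in> C" using mx[OF sc_lt[OF tt(1)] False] .
      then have "sc n (sc n t) \<in> C" using pc_sc[OF tt(1)] tt by auto
      then show ?thesis using t False unfolding phi_def by simp
    qed
  qed
  have inj: "inj_on phi T"
  proof (rule inj_onI)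
    fix t t' assume t: "t \<in> T" and t': "t' \<in> T" and e: "phi t = phi t'"
    have tt: "t < n" "sc n t \<notin> T" using FC_mem[OF T t] by auto
    have tt': "t' < n" "sc n t' \<notin> T" using FC_mem[OF T t'] by auto
    have l: "sc n t < n" "sc n t' < n" using tt tt' sc_lt by auto
    show "t = t'"
    proof (cases "sc n t \<in> C"; cases "sc n t' \<in> C")
      assume "sc n t \<in> C" "sc n t' \<in> C"
      then show ?thesis using e sc_inj[OF tt(1) tt'(1)] unfolding phi_def by simp
    next
      assume "sc n t \<in> C" "sc n t' \<notin> C"
      then have "sc n t = sc n (sc n t')" using e unfolding phi_def by simp
      then have "t = sc n t'" using sc_inj[OF tt(1) l(2)] by simp
      then show ?thesis using tt' t by simp
    next
      assume "sc n t \<notin> C" "sc n t' \<in> C"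
      then have "sc n (sc n t) = sc n t'" using e unfolding phi_def by simp
      then have "sc n t = t'" using sc_inj[OF l(1) tt'(1)] by simp
      then show ?thesis using tt t' by simp
    next
      assume "sc n t \<notin> C" "sc n t' \<notin> C"
      then have "sc n (sc n t) = sc n (sc n t')" using e unfolding phi_def by simp
      then show ?thesis using sc_inj[OF l] sc_inj[OF tt(1) tt'(1)] by simp
    qed
  qed
  show ?thesis using card_inj_on_le[OF inj img Cfin] .
qed

lemma scC_FC: "sc n ` C \<in> FC"
  unfolding FC_def cyc_def
proof (intro CollectI conjI)
  show "sc n ` C \<subseteq> {0..<n}" using Cmem sc_lt by auto
  show "\<forall>x\<in>sc n ` C. sc n x \<notin> sc n ` C"
  proof
    fix x assume "x \<in> sc n ` C"
    then obtain y where y: "y \<in> C" "x = sc n y" by blast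
    show "sc n x \<notin> sc n ` C"
    proof
      assume "sc n x \<in> sc n ` C"
      then obtain y' where y': "y' \<in> C" "sc n x = sc n y'" by blast
      then have "x = y'" using sc_inj[of x n y'] y Cmem sc_lt by auto
      then show False using y y' sc_notC by auto
    qed
  qed
  show "sc n ` C \<inter> C = {}" using sc_notC by auto
qed

lemma scC_card: "card (sc n ` C) = card C"
  using card_image inj_on_subset[OF sc_inj_on Cn] by blast

lemma toggle:
  assumes t: "t < n" "t \<notin> C" "pc n t \<in> C" "sc n t \<in> C"
  shows "sgs FC = 0"
proof -
  let ?F1 = "{T \<in> FC. t \<notin> T}"
  have eq: "FC = ?F1 \<union> insert t ` ?F1"
  proof (rule set_eqI, rule iffI)
    fix T assume T: "T \<in> FC"
    show "T \<in> ?F1 \<union> insert t ` ?F1"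
    proof (cases "t \<in> T")
      case True
      have "T - {t} \<in> ?F1" using T cyc_subset unfolding FC_def by auto
      moreover have "T = insert t (T - {t})" using True by auto
      ultimately show ?thesis by blast
    next
      case False then show ?thesis using T by blast
    qed
  next
    fix T assume "T \<in> ?F1 \<union> insert t ` ?F1"
    then consider "T \<in> ?F1" | T' where "T' \<in> ?F1" "T = insert t T'" by blast
    then show "T \<in> FC"
    proof cases
      case 1 then show ?thesis by simp
    next
      case 2
      have T': "cyc n T'" "T' \<inter> C = {}" "t \<notin> T'" using 2 unfolding FC_def by auto
      have "cyc n (insert t T')"
        unfolding cyc_def
      proof
        show "insert t T' \<subseteq> {0..<n}" using T' t unfolding cyc_def by auto
        show "\<forall>x\<in>insert t T'. sc n x \<notin> insert t T'"
        proof
          fix x assume x: "x \<in> insert t T'"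
          show "sc n x \<notin> insert t T'"
          proof (cases "x = t")
            case True then show ?thesis using t T' sc_neq[of n t] n4 by auto
          next
            case False
            then have xT: "x \<in> T'" "x < n" using x T' unfolding cyc_def by auto
            have "sc n x \<noteq> t" using pc_sc[OF xT(2)] t xT T' by auto
            then show ?thesis using T' xT unfolding cyc_def by auto
          qed
        qed
      qed
      then show ?thesis using 2 T' t unfolding FC_def by auto
    qed
  qed
  have fin1: "finite ?F1" using FC_finite by simp
  have dis: "?F1 \<inter> insert t ` ?F1 = {}" by auto
  have "sgs FC = sgs ?F1 + sgs (insert t ` ?F1)"
    by (subst eq, rule sgs_union) (use fin1 dis in auto)
  also have "sgs (insert t ` ?F1) = - sgs ?F1"
    by (rule sgs_insert_img) (auto simp: FC_def cyc_def intro: finite_subset[OF _ finite_atLeastLessThan])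
  finally show ?thesis by simp
qed

lemma compl_eq: "{0..<n} - C = sc n ` C \<union> pc n ` C"
proof (rule set_eqI, rule iffI)
  fix t assume t: "t \<in> {0..<n} - C"
  then have "pc n t \<in> C \<or> sc n t \<in> C" using mx by auto
  then show "t \<in> sc n ` C \<union> pc n ` C" using sc_pc[of t n] pc_sc[of t n] t by force
next
  fix t assume "t \<in> sc n ` C \<union> pc n ` C"
  then show "t \<in> {0..<n} - C" using sc_notC pc_notC sc_lt pc_lt Cmem by auto
qed

lemma card_inter: "card (sc n ` C \<inter> pc n ` C) + n = 3 * card C"
proof -
  have c1: "card (sc n ` C) = card C" by (rule scC_card)
  have c2: "card (pc n ` C) = card C"
  proof -
    have "inj_on (pc n) C" by (rule inj_onI) (metis sc_pc Cmem)
    then show ?thesis using card_image by blast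
  qed
  have "card (sc n ` C) + card (pc n ` C) = card (sc n ` C \<union> pc n ` C) + card (sc n ` C \<inter> pc n ` C)"
    using Cfin by (intro card_Un_Int) auto
  also have "card (sc n ` C \<union> pc n ` C) = n - card C"
    unfolding compl_eq[symmetric] using Cn Cfin by (simp add: card_Diff_subset)
  finally show ?thesis using c1 c2 card_mono[OF _ Cn] by simp
qed

lemma B_zero: assumes "3 * card C \<noteq> n" shows "sgs FC = 0"
proof -
  have "sc n ` C \<inter> pc n ` C \<noteq> {}" using card_inter assms by (metis add_0 card.empty)
  then obtain y y' where y: "y \<in> C" "y' \<in> C" "sc n y = pc n y'" by blast
  let ?t = "sc n y"
  have "?t < n" using y Cmem sc_lt[of y n] by auto
  moreover have "?t \<notin> C" using sc_notC y by blast
  moreover have "pc n ?t = y" by (rule pc_sc[OF Cmem[OF y(1)]])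
  then have "pc n ?t \<in> C" using y(1) by simp
  moreover have "sc n ?t = y'" using y(3) sc_pc[OF Cmem[OF y(2)]] by simp
  then have "sc n ?t \<in> C" using y(2) by simp
  ultimately show ?thesis using toggle by blast
qed

end



definition Fam :: "'k set \<Rightarrow> ('k \<Rightarrow> 'a) \<Rightarrow> ('k \<Rightarrow> 'a) \<Rightarrow> 'a set set" where
  "Fam K u v = {T. T \<subseteq> u ` K \<union> v ` K \<and> (\<forall>k\<in>K. \<not> (u k \<in> T \<and> v k \<in> T))}"

lemma Fam_finite: "finite K \<Longrightarrow> finite (Fam K u v)"
  by (rule finite_subset[of _ "Pow (u ` K \<union> v ` K)"]) (auto simp: Fam_def)

lemma Fam_memI:
  assumes "T \<subseteq> u ` K \<union> v ` K" "\<And>k. k \<in> K \<Longrightarrow> u k \<in> T \<Longrightarrow> v k \<in> T \<Longrightarrow> False"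
  shows "T \<in> Fam K u v"
  using assms unfolding Fam_def by blast

lemma Fam_memD:
  assumes "T \<in> Fam K u v"
  shows "T \<subseteq> u ` K \<union> v ` K" "\<And>k. k \<in> K \<Longrightarrow> u k \<in> T \<Longrightarrow> v k \<in> T \<Longrightarrow> False"
  using assms unfolding Fam_def by blast+

lemma pair_sgs:
  assumes "finite K"
  shows "inj_on u K \<Longrightarrow> inj_on v K \<Longrightarrow> u ` K \<inter> v ` K = {} \<Longrightarrow> sgs (Fam K u v) = (-1) ^ card K"
  using assms
proof (induction K rule: finite_induct)
  case empty
  have "Fam {} u v = {{}}" unfolding Fam_def by auto
  then show ?case by (simp add: sgs_def)
next
  case (insert a K)
  have inju: "inj_on u K" using insert.prems(1) by (rule inj_on_subset) blast
  have injv: "inj_on v K" using insert.prems(2) by (rule inj_on_subset) blast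
  have dis: "u ` K \<inter> v ` K = {}" using insert.prems(3) by blast
  have IH: "sgs (Fam K u v) = (-1) ^ card K" using insert.IH[OF inju injv dis] .
  have u1: "u a \<notin> u ` K" using insert.prems(1) insert.hyps(2) by (simp add: inj_on_insert)
  have v1: "v a \<notin> v ` K" using insert.prems(2) insert.hyps(2) by (simp add: inj_on_insert)
  have u2: "u a \<notin> v ` K" using insert.prems(3) by blast
  have v2: "v a \<notin> u ` K" using insert.prems(3) by blast
  have uv: "u a \<noteq> v a" using insert.prems(3) by blast
  let ?F = "Fam K u v"
  have finU: "finite (u ` K \<union> v ` K)" using insert.hyps(1) by simp
  have memF: "u a \<notin> T \<and> v a \<notin> T \<and> finite T" if T: "T \<in> ?F" for T
  proof -
    have Ts: "T \<subseteq> u ` K \<union> v ` K" using Fam_memD(1)[OF T] .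
    show ?thesis using Ts u1 u2 v1 v2 finite_subset[OF Ts finU] by blast
  qed
  have bkI: "T \<in> Fam (insert a K) u v" if Tp: "T' \<in> ?F" and T: "T = T' \<or> T = insert (u a) T' \<or> T = insert (v a) T'" for T T'
  proof (rule Fam_memI)
    have Ts: "T' \<subseteq> u ` K \<union> v ` K" using Fam_memD(1)[OF Tp] .
    show "T \<subseteq> u ` insert a K \<union> v ` insert a K" using Ts T by auto
    fix k assume k: "k \<in> insert a K" and h1: "u k \<in> T" and h2: "v k \<in> T"
    have nn: "u a \<notin> T'" "v a \<notin> T'" using memF[OF Tp] by auto
    show False
    proof (cases "k = a")
      case True
      then show False using T h1 h2 nn uv by auto
    next
      case False
      then have kK: "k \<in> K" using k by simp
      have ukK: "u k \<in> u ` K" "v k \<in> v ` K" using kK by auto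
      have "u k \<noteq> u a" "u k \<noteq> v a" "v k \<noteq> u a" "v k \<noteq> v a"
        using ukK u1 u2 v1 v2 by metis+
      then have "u k \<in> T'" "v k \<in> T'" using T h1 h2 by auto
      then show False using Fam_memD(2)[OF Tp kK] by blast
    qed
  qed
  have eq: "Fam (insert a K) u v = ?F \<union> insert (u a) ` ?F \<union> insert (v a) ` ?F"
  proof (rule set_eqI, rule iffI)
    fix T assume T: "T \<in> Fam (insert a K) u v"
    let ?T' = "T - {u a, v a}"
    have T': "?T' \<in> ?F"
    proof (rule Fam_memI)
      show "?T' \<subseteq> u ` K \<union> v ` K" using Fam_memD(1)[OF T] by auto
      fix k assume "k \<in> K" "u k \<in> ?T'" "v k \<in> ?T'"
      then show False using Fam_memD(2)[OF T, of k] by auto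
    qed
    have "\<not> (u a \<in> T \<and> v a \<in> T)" using Fam_memD(2)[OF T, of a] by auto
    then consider "u a \<notin> T" "v a \<notin> T" | "u a \<in> T" "v a \<notin> T" | "u a \<notin> T" "v a \<in> T" by blast
    then show "T \<in> ?F \<union> insert (u a) ` ?F \<union> insert (v a) ` ?F"
    proof cases
      case 1 then have "T = ?T'" by auto
      then show ?thesis using T' by auto
    next
      case 2 then have "T = insert (u a) ?T'" by auto
      then show ?thesis using T' by blast
    next
      case 3 then have "T = insert (v a) ?T'" by auto
      then show ?thesis using T' by blast
    qed
  next
    fix T assume "T \<in> ?F \<union> insert (u a) ` ?F \<union> insert (v a) ` ?F"
    then obtain T' where "T' \<in> ?F" "T = T' \<or> T = insert (u a) T' \<or> T = insert (v a) T'" by blast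
    then show "T \<in> Fam (insert a K) u v" by (rule bkI)
  qed
  have fin: "finite ?F" using Fam_finite insert.hyps(1) by blast
  have d1: "?F \<inter> insert (u a) ` ?F = {}" using memF by blast
  have d2: "(?F \<union> insert (u a) ` ?F) \<inter> insert (v a) ` ?F = {}" using memF uv by blast
  have "sgs (Fam (insert a K) u v) = sgs (?F \<union> insert (u a) ` ?F) + sgs (insert (v a) ` ?F)"
    unfolding eq by (rule sgs_union) (use fin d2 in auto)
  also have "sgs (?F \<union> insert (u a) ` ?F) = sgs ?F + sgs (insert (u a) ` ?F)"
    by (rule sgs_union) (use fin d1 in auto)
  also have "sgs (insert (u a) ` ?F) = - sgs ?F" by (rule sgs_insert_img) (use memF in blast)
  also have "sgs (insert (v a) ` ?F) = - sgs ?F" by (rule sgs_insert_img) (use memF in blast)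
  finally show ?case using IH insert.hyps by simp
qed

context cctx
begin

lemma B_three:
  assumes three: "3 * card C = n"
  shows "sgs FC = (-1) ^ card C"
proof -
  have fin': "finite (sc n ` C \<inter> pc n ` C)" using Cfin by simp
  have noint: "sc n ` C \<inter> pc n ` C = {}" using card_inter three fin' by simp
  have scl: "sc n y < n" if "y \<in> C" for y using sc_lt[OF Cmem[OF that]] .
  have sscl: "sc n (sc n y) < n" if "y \<in> C" for y using sc_lt[OF scl[OF that]] .
  have ss_notC: "sc n (sc n y) \<notin> C" if y: "y \<in> C" for y
  proof
    assume h: "sc n (sc n y) \<in> C"
    have "pc n (sc n (sc n y)) = sc n y" by (rule pc_sc[OF scl[OF y]])
    then have "sc n y \<in> pc n ` C" using h by (metis image_eqI)
    moreover have "sc n y \<in> sc n ` C" using y by blast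
    ultimately show False using noint by blast
  qed
  let ?u = "sc n" and ?v = "\<lambda>y. sc n (sc n y)"
  have inju: "inj_on ?u C" using inj_on_subset[OF sc_inj_on Cn] .
  have injv: "inj_on ?v C"
  proof (rule inj_onI)
    fix x y assume x: "x \<in> C" and y: "y \<in> C" and e: "sc n (sc n x) = sc n (sc n y)"
    have "sc n x = sc n y" using sc_inj[OF scl[OF x] scl[OF y] e] .
    then show "x = y" using sc_inj[OF Cmem[OF x] Cmem[OF y]] by blast
  qed
  have disj: "?u ` C \<inter> ?v ` C = {}"
  proof (rule ccontr)
    assume "?u ` C \<inter> ?v ` C \<noteq> {}"
    then obtain y y' where y: "y \<in> C" "y' \<in> C" "sc n y = sc n (sc n y')" by blast
    then have "y = sc n y'" using sc_inj[OF Cmem[OF y(1)] scl[OF y(2)]] by blast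
    then show False using y sc_notC by blast
  qed
  have eq: "FC = Fam C ?u ?v"
  proof (rule set_eqI, rule iffI)
    fix T assume T: "T \<in> FC"
    have sub: "T \<subseteq> ?u ` C \<union> ?v ` C"
    proof
      fix t assume t: "t \<in> T"
      have tt: "t < n" "t \<notin> C" "sc n t \<notin> T" using FC_mem[OF T t] by auto
      show "t \<in> ?u ` C \<union> ?v ` C"
      proof (cases "pc n t \<in> C")
        case True
        have "t = sc n (pc n t)" using sc_pc[OF tt(1)] by simp
        then show ?thesis using True by blast
      next
        case False
        have "pc n (pc n t) \<in> C \<or> sc n (pc n t) \<in> C" using mx[OF pc_lt[OF tt(1)] False] .
        then have pp: "pc n (pc n t) \<in> C" using sc_pc[OF tt(1)] tt by auto
        have "sc n (sc n (pc n (pc n t))) = t" using sc_pc[OF pc_lt[OF tt(1)]] sc_pc[OF tt(1)] by simp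
        then show ?thesis using pp by (metis UnI2 image_eqI)
      qed
    qed
    have "\<not> (sc n y \<in> T \<and> sc n (sc n y) \<in> T)" if "y \<in> C" for y
      using T unfolding FC_def cyc_def by auto
    then show "T \<in> Fam C ?u ?v" using sub by (intro Fam_memI) auto
  next
    fix T assume T: "T \<in> Fam C ?u ?v"
    have sub: "T \<subseteq> ?u ` C \<union> ?v ` C" using Fam_memD(1)[OF T] .
    have pr: "\<And>y. y \<in> C \<Longrightarrow> sc n y \<in> T \<Longrightarrow> sc n (sc n y) \<in> T \<Longrightarrow> False"
      using Fam_memD(2)[OF T] by blast
    have memT: "\<exists>y\<in>C. x = sc n y \<or> x = sc n (sc n y)" if "x \<in> T" for x
      using sub that by blast
    have Tn: "x < n" if "x \<in> T" for x
      using memT[OF that] scl sscl by blast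
    have TC: "x \<notin> C" if "x \<in> T" for x
      using memT[OF that] sc_notC ss_notC by blast
    have "sc n x \<notin> T" if x: "x \<in> T" for x
    proof
      assume h: "sc n x \<in> T"
      obtain y where y: "y \<in> C" "x = sc n y \<or> x = sc n (sc n y)" using memT[OF x] by blast
      obtain y' where y': "y' \<in> C" "sc n x = sc n y' \<or> sc n x = sc n (sc n y')" using memT[OF h] by blast
      show False
      proof (cases "x = sc n y")
        case True
        then show False using pr[OF y(1)] x h by simp
      next
        case False
        then have xy: "x = sc n (sc n y)" using y(2) by simp
        show False
        proof (cases "sc n x = sc n y'")
          case True
          then have "x = y'" using sc_inj[OF Tn[OF x] Cmem[OF y'(1)]] by blast
          then show False using TC[OF x] y'(1) by simp
        next
          case False
          then have "sc n x = sc n (sc n y')" using y'(2) by simp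
          then have "x = sc n y'" using sc_inj[OF Tn[OF x] scl[OF y'(1)]] by blast
          then have "sc n y = y'" using xy sc_inj[OF scl[OF y(1)] Cmem[OF y'(1)]] by simp
          then show False using sc_notC[OF y(1)] y'(1) by simp
        qed
      qed
    qed
    then show "T \<in> FC" using Tn TC unfolding FC_def cyc_def by auto
  qed
  show ?thesis unfolding eq by (rule pair_sgs[OF Cfin inju injv disj])
qed

end



context cctx
begin

abbreviation "GE \<equiv> susp_edge (cycle_edge n) n C"

lemma nC: "n \<notin> C" using Cmem by auto

lemma indep_G: "{S. indep_set {0..n} GE S} = {S. cyc n S} \<union> insert n ` FC"
proof (rule set_eqI, rule iffI)
  fix S assume "S \<in> {S. indep_set {0..n} GE S}"
  then have S: "S \<subseteq> {0..n}" "\<And>x y. x \<in> S \<Longrightarrow> y \<in> S \<Longrightarrow> \<not> GE x y"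
    unfolding indep_set_def by auto
  have cyc_part: "cyc n (S - {n})"
    unfolding cyc_def
  proof
    show "S - {n} \<subseteq> {0..<n}" using S(1) by auto
    show "\<forall>x\<in>S - {n}. sc n x \<notin> S - {n}"
    proof (intro ballI notI)
      fix x assume x: "x \<in> S - {n}" and h: "sc n x \<in> S - {n}"
      have "x < n" using x S(1) by auto
      then have "cycle_edge n x (sc n x)" unfolding cycle_edge_sc using sc_lt by auto
      then show False using S(2)[of x "sc n x"] x h unfolding susp_edge_def by auto
    qed
  qed
  show "S \<in> {S. cyc n S} \<union> insert n ` FC"
  proof (cases "n \<in> S")
    case True
    have "(S - {n}) \<inter> C = {}"
    proof (rule ccontr)
      assume "(S - {n}) \<inter> C \<noteq> {}"
      then obtain y where "y \<in> S" "y \<in> C" by blast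
      then show False using S(2)[of n y] True unfolding susp_edge_def by auto
    qed
    then have "S - {n} \<in> FC" using cyc_part unfolding FC_def by auto
    moreover have "S = insert n (S - {n})" using True by auto
    ultimately show ?thesis by blast
  next
    case False
    then show ?thesis using cyc_part by simp
  qed
next
  fix S assume "S \<in> {S. cyc n S} \<union> insert n ` FC"
  then consider "cyc n S" | T where "T \<in> FC" "S = insert n T" by blast
  then show "S \<in> {S. indep_set {0..n} GE S}"
  proof cases
    case 1
    then show ?thesis unfolding indep_set_def susp_edge_def cycle_edge_sc cyc_def
      by (auto simp: subset_iff)
  next
    case 2
    then have T: "cyc n T" "T \<inter> C = {}" unfolding FC_def by auto
    then show ?thesis unfolding indep_set_def susp_edge_def cycle_edge_sc 2(2) using nC
      unfolding cyc_def by (auto simp: subset_iff)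
  qed
qed

lemma ipsum_G: "ipsum {0..n} GE = sgs {S. cyc n S} - sgs FC"
proof -
  have dis: "{S. cyc n S} \<inter> insert n ` FC = {}" unfolding cyc_def by auto
  have "ipsum {0..n} GE = sgs ({S. cyc n S} \<union> insert n ` FC)"
    unfolding ipsum_def sgs_def indep_G ..
  also have "\<dots> = sgs {S. cyc n S} + sgs (insert n ` FC)"
    by (rule sgs_union) (use dis cyc_finite FC_finite in auto)
  also have "sgs (insert n ` FC) = - sgs FC"
    by (rule sgs_insert_img) (auto simp: FC_def cyc_def intro: finite_subset[OF _ finite_atLeastLessThan])
  finally show ?thesis by simp
qed

lemma c_le: "card C \<le> n div 2" using cyc_card[of n C] n4 cC by auto

lemma num_G: "indep_num {0..n} GE = (if card C = n div 2 then n div 2 + 1 else n div 2)"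
proof (rule indep_numI)
  show "finite {0..n}" by simp
  let ?W = "if card C = n div 2 then insert n (sc n ` C) else (\<lambda>i. 2 * i) ` {0..<n div 2}"
  show "indep_set {0..n} GE ?W"
  proof (cases "card C = n div 2")
    case True
    have "insert n (sc n ` C) \<in> {S. indep_set {0..n} GE S}" unfolding indep_G using scC_FC by blast
    then show ?thesis using True by simp
  next
    case False
    have "(\<lambda>i. 2 * i) ` {0..<n div 2} \<in> {S. indep_set {0..n} GE S}" unfolding indep_G using evens_cyc by blast
    then show ?thesis using False by simp
  qed
  show "card ?W = (if card C = n div 2 then n div 2 + 1 else n div 2)"
  proof (cases "card C = n div 2")
    case True
    have "n \<notin> sc n ` C" using Cmem sc_lt by fastforce
    then show ?thesis using True scC_card Cfin by simp
  next
    case False then show ?thesis using evens_card by simp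
  qed
  fix S assume "indep_set {0..n} GE S"
  then have "S \<in> {S. cyc n S} \<union> insert n ` FC" unfolding indep_G[symmetric] by simp
  then consider "cyc n S" | T where "T \<in> FC" "S = insert n T" by blast
  then show "card S \<le> (if card C = n div 2 then n div 2 + 1 else n div 2)"
  proof cases
    case 1 then show ?thesis using cyc_card[of n S] n4 by auto
  next
    case 2
    have "finite T" using 2(1) unfolding FC_def cyc_def using finite_subset by blast
    moreover have "n \<notin> T" using 2(1) unfolding FC_def cyc_def by auto
    ultimately have "card S = card T + 1" using 2(2) by simp
    then show ?thesis using FC_card[OF 2(1)] c_le by auto
  qed
qed

end

lemma ceil3: "nat \<lceil>real n / 3\<rceil> = (n + 2) div 3"
proof -
  have "\<lceil>real n / 3\<rceil> = int ((n + 2) div 3)"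
  proof (rule ceiling_unique)
    have "n \<le> 3 * ((n + 2) div 3)" by linarith
    then have "real n \<le> 3 * real ((n + 2) div 3)" by linarith
    then show "real n / 3 \<le> real_of_int (int ((n + 2) div 3))" by simp
    have "3 * ((n + 2) div 3) < n + 3" by linarith
    then have "3 * real ((n + 2) div 3) < real n + 3" by linarith
    then show "real_of_int (int ((n + 2) div 3)) - 1 < real n / 3" by simp
  qed
  then show ?thesis by simp
qed

lemma neg1_cases: "(-1::int) ^ k = 1 \<or> (-1::int) ^ k = -1"
  by (cases "even k") auto

theorem theorem6p3:
  fixes n :: nat and C :: "nat set"
  assumes "n \<ge> 4"
    and "maximal_indep_set {0..<n} (cycle_edge n) C"
  defines "c \<equiv> card C"
    and "\<alpha> \<equiv> n div 2"
    and "a \<equiv> (-1) ^ (n div 2) * poly (indep_poly {0..<n} (cycle_edge n)) (-1)"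
    and "h \<equiv> h_coeff {0..n} (susp_edge (cycle_edge n) n C)
               (indep_num {0..n} (susp_edge (cycle_edge n) n C))"
  shows "(c = \<alpha> \<longrightarrow> h = - a)
       \<and> (c = nat \<lceil>real n / 3\<rceil> \<and> nat \<lceil>real n / 3\<rceil> < \<alpha> \<longrightarrow> h = sgn a)
       \<and> (nat \<lceil>real n / 3\<rceil> < c \<and> c < \<alpha> \<longrightarrow> h = a)"
proof -
  interpret cctx n C
    using maximal_props[OF assms(1,2)] assms(1) by unfold_locales auto
  define A where "A = sgs {S. cyc n S}"
  define B where "B = sgs FC"
  have aA: "a = (-1) ^ \<alpha> * A"
  proof -
    have "{S. indep_set {0..<n} (cycle_edge n) S} = {S. cyc n S}" using indep_cyc[of n] n4 by auto
    then show ?thesis unfolding a_def \<alpha>_def A_def poly_ip ipsum_def sgs_def by simp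
  qed
  have hD: "h = (-1) ^ (if c = \<alpha> then \<alpha> + 1 else \<alpha>) * (A - B)"
  proof -
    have "h = (-1) ^ indep_num {0..n} GE * ipsum {0..n} GE"
      unfolding h_def by (rule h_top) simp
    then show ?thesis unfolding num_G ipsum_G A_def B_def c_def \<alpha>_def by simp
  qed
  have Aval: "A = (if n mod 3 = 0 then 2 * (-1) ^ (n div 3)
          else if n mod 3 = 1 then (-1) ^ (n div 3) else - ((-1) ^ (n div 3)))"
    unfolding A_def by (rule A_val[OF n4])
  have ce: "nat \<lceil>real n / 3\<rceil> = (n + 2) div 3" by (rule ceil3)
  have part1: "c = \<alpha> \<longrightarrow> h = - a"
  proof
    assume c: "c = \<alpha>"
    have "3 * card C \<noteq> n" using c n4 unfolding c_def \<alpha>_def by linarith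
    then have "B = 0" unfolding B_def by (rule B_zero)
    then show "h = - a" using hD c aA by simp
  qed
  have part2: "c = nat \<lceil>real n / 3\<rceil> \<and> nat \<lceil>real n / 3\<rceil> < \<alpha> \<longrightarrow> h = sgn a"
  proof
    assume c: "c = nat \<lceil>real n / 3\<rceil> \<and> nat \<lceil>real n / 3\<rceil> < \<alpha>"
    then have c3: "c = (n + 2) div 3" "c \<noteq> \<alpha>" using ce by auto
    have h1: "h = (-1) ^ \<alpha> * (A - B)" using hD c3 by simp
    show "h = sgn a"
    proof (cases "3 * c = n")
      case True
      have B: "B = (-1) ^ c" unfolding B_def using B_three True c_def by simp
      have m: "n mod 3 = 0" "n div 3 = c" using True by auto
      have A: "A = 2 * (-1) ^ c" using Aval m by simp
      have "h = (-1) ^ \<alpha> * (-1) ^ c" using h1 A B by simp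
      moreover have "a = 2 * ((-1) ^ \<alpha> * (-1) ^ c)" using aA A by simp
      ultimately show ?thesis using neg1_cases[of \<alpha>] neg1_cases[of c] by (auto simp: sgn_mult)
    next
      case False
      have "B = 0" unfolding B_def using B_zero False c_def by simp
      have m: "n mod 3 \<noteq> 0"
      proof
        assume m0: "n mod 3 = 0"
        have "3 * ((n + 2) div 3) = n" using m0 by presburger
        then show False using False c3(1) by simp
      qed
      have "A = (-1) ^ (n div 3) \<or> A = - ((-1) ^ (n div 3))" using Aval m by auto
      then have "a = 1 \<or> a = -1" using aA neg1_cases[of \<alpha>] neg1_cases[of "n div 3"] by auto
      moreover have "h = a" using h1 \<open>B = 0\<close> aA by simp
      ultimately show ?thesis by auto
    qed
  qed
  have part3: "nat \<lceil>real n / 3\<rceil> < c \<and> c < \<alpha> \<longrightarrow> h = a"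
  proof
    assume c: "nat \<lceil>real n / 3\<rceil> < c \<and> c < \<alpha>"
    then have "3 * c \<noteq> n" using ce by auto
    then have "B = 0" unfolding B_def using B_zero c_def by simp
    then show "h = a" using hD c aA by simp
  qed
  show ?thesis using part1 part2 part3 by blast
qed


end
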